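(* Let $\mathcal{H}_A$ and $\mathcal{H}_B$ be finite-dimensional Hilbert spaces. On $\mathcal{H}_A$ let $X_A=\{e^A_i\}$ and $Y_A=\{f^A_j\}$ be two orthonormal bases, and on $\mathcal{H}_B$ let $X_B=\{e^B_k\}$ and $Y_B=\{f^B_l\}$ be two orthonormal bases. Let $X_{AB}=\{e^A_i\otimes e^B_k\}_{i,k}$ and $Y_{AB}=\{f^A_j\otimes f^B_l\}_{j,l}$ be the corresponding product bases of $\mathcal{H}_A\otimes\mathcal{H}_B$. Fix weights $\lambda,\mu>0$, and suppose $c_A(\lambda,\mu),c_B(\lambda,\mu)\in\mathbb{R}$ satisfy $$\lambda H(X_A|\rho_A)+\mu H(Y_A|\rho_A)\ge c_A(\lambda,\mu)\quad\text{for all density matrices }\rho_A \text{ on }\mathcal{H}_A,$$ $$\lambda H(X_B|\rho_B)+\mu H(Y_B|\rho_B)\ge c_B(\lambda,\mu)\quad\text{for all density matrices }\rho_B \text{ on }\mathcal{H}_B.$$ Then $$\lambda H(X_{AB}|\rho_{AB})+\mu H(Y_{AB}|\rho_{AB})\ge c_A(\lambda,\mu)+c_B(\lambda,\mu)$$ for all density matrices $\rho_{AB}$ on $\mathcal{H}_A\otimes\mathcal{H}_B$. Moreover, if $c_A(\lambda,\mu)$ and $c_B(\lambda,\mu)$ are the optimal (largest possible) such constants, i.e. $c_A(\lambda,\mu)=\inf_{\rho_A}[\lambda H(X_A|\rho_A)+\mu H(Y_A|\rho_A)]$ and likewise for $B$, then $$\inf_{\rho_{AB}}\big[\lambda H(X_{AB}|\rho_{AB})+\mu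 H(Y_{AB}|\rho_{AB})\big]=c_A(\lambda,\mu)+c_B(\lambda,\mu).$$
   Context: A density matrix is a positive semidefinite operator of trace one. For an orthonormal basis $X=\{e_i\}$ of a finite-dimensional Hilbert space and a density matrix $\rho$, the outcome distribution is $p_i=\langle e_i|\rho|e_i\rangle$ and $H(X|\rho):=-\sum_i p_i\log p_i$ (Shannon entropy, with $0\log 0=0$ and a fixed logarithm base $>1$). *)

theory Defs
  imports Complex_Main
begin

text \<open>A finite-dimensional Hilbert space is modelled as the space of functions
  'n \<Rightarrow> complex over a finite index type 'n, with inner product
  <u,v> = sum over x of cnj (u x) * v x.\<close>

definition cinner_fun :: "('n::finite \<Rightarrow> complex) \<Rightarrow> ('n \<Rightarrow> complex) \<Rightarrow> complex" where
  "cinner_fun u v = (\<Sum>x\<in>UNIV. cnj (u x) * v x)"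

definition apply_op :: "('n::finite \<Rightarrow> 'n \<Rightarrow> complex) \<Rightarrow> ('n \<Rightarrow> complex) \<Rightarrow> ('n \<Rightarrow> complex)" where
  "apply_op \<rho> v = (\<lambda>x. \<Sum>y\<in>UNIV. \<rho> x y * v y)"

definition density :: "('n::finite \<Rightarrow> 'n \<Rightarrow> complex) \<Rightarrow> bool" where
  "density \<rho> \<longleftrightarrow>
     (\<forall>x y. \<rho> y x = cnj (\<rho> x y)) \<and>
     (\<forall>v. Im (cinner_fun v (apply_op \<rho> v)) = 0 \<and> 0 \<le> Re (cinner_fun v (apply_op \<rho> v))) \<and>
     (\<Sum>x\<in>UNIV. \<rho> x x) = 1"

text \<open>Orthonormal basis e = {e i}, indexed by the index type itself
  (an orthonormal family with dim-many vectors).\<close>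
definition onb :: "('n::finite \<Rightarrow> 'n \<Rightarrow> complex) \<Rightarrow> bool" where
  "onb e \<longleftrightarrow> (\<forall>i j. cinner_fun (e i) (e j) = (if i = j then 1 else 0))"

definition outcome_prob :: "('n::finite \<Rightarrow> 'n \<Rightarrow> complex) \<Rightarrow> ('n \<Rightarrow> 'n \<Rightarrow> complex) \<Rightarrow> 'n \<Rightarrow> real" where
  "outcome_prob e \<rho> i = Re (cinner_fun (e i) (apply_op \<rho> (e i)))"

definition meas_entropy :: "real \<Rightarrow> ('n::finite \<Rightarrow> 'n \<Rightarrow> complex) \<Rightarrow> ('n \<Rightarrow> 'n \<Rightarrow> complex) \<Rightarrow> real" where
  "meas_entropy b e \<rho> =
     - (\<Sum>i\<in>UNIV. (let p = outcome_prob e \<rho> i in if p = 0 then 0 else p * log b p))"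

text \<open>Product basis {e_i (x) f_k} of H_A (x) H_B, with H_A (x) H_B = functions on 'a \<times> 'b.\<close>
definition tensor_basis :: "('a::finite \<Rightarrow> 'a \<Rightarrow> complex) \<Rightarrow> ('b::finite \<Rightarrow> 'b \<Rightarrow> complex)
    \<Rightarrow> ('a \<times> 'b) \<Rightarrow> ('a \<times> 'b) \<Rightarrow> complex" where
  "tensor_basis e f = (\<lambda>(i, k) (x, y). e i x * f k y)"

end

theory Submission
  imports Defs "HOL-Analysis.Cartesian_Space"
begin


lemma onb_complete:
  fixes e :: "'n::finite \<Rightarrow> 'n \<Rightarrow> complex"
  assumes "onb e"
  shows "(\<Sum>i\<in>UNIV. cnj (e i x) * e i y) = (if x = y then 1 else 0)"
proof -
  define A :: "complex^'n^'n" where "A = (\<chi> i x. cnj (e i x))"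
  define B :: "complex^'n^'n" where "B = (\<chi> x i. e i x)"
  have "A ** B = mat 1"
    using assms unfolding onb_def cinner_fun_def
    by (simp add: A_def B_def matrix_matrix_mult_def mat_def vec_eq_iff)
  hence "B ** A = mat 1" using matrix_left_right_inverse by blast
  hence "(B ** A) $ y $ x = mat 1 $ y $ x" by simp
  thus ?thesis
    by (auto simp add: A_def B_def matrix_matrix_mult_def mat_def mult.commute)
qed



definition quad :: "('n::finite \<Rightarrow> 'n \<Rightarrow> complex) \<Rightarrow> ('n \<Rightarrow> complex) \<Rightarrow> complex" where
  "quad M v = cinner_fun v (apply_op M v)"

lemma quad_expand: "quad M v = (\<Sum>x\<in>UNIV. \<Sum>y\<in>UNIV. cnj (v x) * M x y * v y)"
  unfolding quad_def cinner_fun_def apply_op_def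
  by (simp add: sum_distrib_left mult.assoc)

definition trace :: "('n::finite \<Rightarrow> 'n \<Rightarrow> complex) \<Rightarrow> complex" where
  "trace M = (\<Sum>x\<in>UNIV. M x x)"

lemma trace_onb:
  fixes f :: "'n::finite \<Rightarrow> 'n \<Rightarrow> complex"
  assumes "onb f"
  shows "(\<Sum>k\<in>UNIV. quad M (f k)) = trace M"
proof -
  have "(\<Sum>k\<in>UNIV. quad M (f k)) = (\<Sum>k\<in>UNIV. \<Sum>x\<in>UNIV. \<Sum>y\<in>UNIV. M x y * (cnj (f k x) * f k y))"
    by (simp add: quad_expand algebra_simps)
  also have "\<dots> = (\<Sum>x\<in>UNIV. \<Sum>k\<in>UNIV. \<Sum>y\<in>UNIV. M x y * (cnj (f k x) * f k y))"
    by (rule sum.swap)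
  also have "\<dots> = (\<Sum>x\<in>UNIV. \<Sum>y\<in>UNIV. \<Sum>k\<in>UNIV. M x y * (cnj (f k x) * f k y))"
    by (rule sum.cong[OF refl], rule sum.swap)
  also have "\<dots> = (\<Sum>x\<in>UNIV. \<Sum>y\<in>UNIV. M x y * (if x = y then 1 else 0))"
    by (simp add: sum_distrib_left[symmetric] onb_complete[OF assms])
  also have "\<dots> = trace M" unfolding trace_def
    by (rule sum.cong[OF refl]) (simp add: if_distrib[of "\<lambda>z. _ * z"] cong: if_cong)
  finally show ?thesis .
qed



definition ent :: "real \<Rightarrow> real \<Rightarrow> real" where
  "ent b p = (if p = 0 then 0 else p * log b p)"

lemma meas_entropy_ent: "meas_entropy b e \<rho> = - (\<Sum>i\<in>UNIV. ent b (Re (quad \<rho> (e i))))"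
  by (simp add: meas_entropy_def ent_def outcome_prob_def quad_def Let_def)

lemma ent_div:
  assumes "b > 1" "p \<ge> 0" "T > 0"
  shows "ent b (p / T) = (ent b p - p * log b T) / T"
proof (cases "p = 0")
  case True thus ?thesis by (simp add: ent_def)
next
  case False
  hence "p > 0" using assms by simp
  thus ?thesis using assms False
    by (simp add: ent_def log_divide right_diff_distrib diff_divide_distrib)
qed

lemma ent_sum_div:
  fixes P :: "'n::finite \<Rightarrow> real"
  assumes "b > 1" "\<And>k. P k \<ge> 0" "(\<Sum>k\<in>UNIV. P k) = T" "T > 0"
  shows "(\<Sum>k\<in>UNIV. ent b (P k / T)) = ((\<Sum>k\<in>UNIV. ent b (P k)) - ent b T) / T"
proof -
  have "(\<Sum>k\<in>UNIV. ent b (P k / T)) = (\<Sum>k\<in>UNIV. (ent b (P k) - P k * log b T) / T)"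
    using ent_div[OF assms(1) assms(2) assms(4)] by simp
  also have "\<dots> = ((\<Sum>k\<in>UNIV. ent b (P k)) - (\<Sum>k\<in>UNIV. P k) * log b T) / T"
    by (simp add: sum_divide_distrib[symmetric] sum_subtractf sum_distrib_right)
  also have "\<dots> = ((\<Sum>k\<in>UNIV. ent b (P k)) - ent b T) / T"
    using assms by (simp add: ent_def)
  finally show ?thesis .
qed

lemma quad_scale: "quad (\<lambda>x y. M x y / c) v = quad M v / c"
  by (simp add: quad_expand sum_divide_distrib)


lemma generic_cond:
  fixes M :: "'n::finite \<Rightarrow> 'n \<Rightarrow> complex" and f h :: "'n \<Rightarrow> 'n \<Rightarrow> complex"
  assumes b: "b > 1" and herm: "\<forall>x y. M y x = cnj (M x y)"
    and psd: "\<forall>v. Im (quad M v) = 0 \<and> 0 \<le> Re (quad M v)"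
    and of: "onb f" and oh: "onb h"
    and hyp: "\<forall>\<rho>::'n\<Rightarrow>'n\<Rightarrow>complex. density \<rho> \<longrightarrow> lam * meas_entropy b f \<rho> + mu * meas_entropy b h \<rho> \<ge> c"
  shows "lam * (ent b (Re (trace M)) - (\<Sum>k\<in>UNIV. ent b (Re (quad M (f k)))))
       + mu * (ent b (Re (trace M)) - (\<Sum>k\<in>UNIV. ent b (Re (quad M (h k))))) \<ge> Re (trace M) * c"
proof -
  define T where "T = Re (trace M)"
  have sf: "(\<Sum>k\<in>UNIV. Re (quad M (f k))) = T"
    using trace_onb[OF of, of M] unfolding T_def by (metis Re_sum)
  have sh: "(\<Sum>k\<in>UNIV. Re (quad M (h k))) = T"
    using trace_onb[OF oh, of M] unfolding T_def by (metis Re_sum)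
  have imT: "Im (trace M) = 0"
  proof -
    have "Im (trace M) = (\<Sum>k\<in>UNIV. Im (quad M (f k)))"
      using trace_onb[OF of, of M] by (metis Im_sum)
    also have "\<dots> = 0" using psd by simp
    finally show ?thesis .
  qed
  have trM: "trace M = complex_of_real T"
    using imT unfolding T_def by (simp add: complex_eq_iff)
  have T0: "T \<ge> 0" unfolding sf[symmetric] using psd by (simp add: sum_nonneg)
  show ?thesis
  proof (cases "T = 0")
    case True
    have zf: "\<And>k. Re (quad M (f k)) = 0"
      using sf True psd sum_nonneg_eq_0_iff[of UNIV "\<lambda>k. Re (quad M (f k))"] by auto
    have zh: "\<And>k. Re (quad M (h k)) = 0"
      using sh True psd sum_nonneg_eq_0_iff[of UNIV "\<lambda>k. Re (quad M (h k))"] by auto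
    show ?thesis using True zf zh by (simp add: T_def[symmetric] ent_def)
  next
    case False
    hence Tp: "T > 0" using T0 by simp
    define M' where "M' = (\<lambda>x y. M x y / complex_of_real T)"
    have qM': "\<And>v. quad M' v = quad M v / complex_of_real T"
      unfolding M'_def by (rule quad_scale)
    have dens: "density M'"
      unfolding density_def
    proof (intro conjI allI)
      fix x y show "M' y x = cnj (M' x y)" using herm[rule_format, of x y] by (simp add: M'_def)
    next
      fix v show "Im (cinner_fun v (apply_op M' v)) = 0"
        using qM'[of v] psd unfolding quad_def by (simp add: Im_divide_of_real)
    next
      fix v show "0 \<le> Re (cinner_fun v (apply_op M' v))"
        using qM'[of v] psd Tp unfolding quad_def by (simp add: Re_divide_of_real)
    next
      show "(\<Sum>x\<in>UNIV. M' x x) = 1"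
        using trM Tp unfolding M'_def trace_def by (simp add: sum_divide_distrib[symmetric])
    qed
    have Hf: "meas_entropy b f M' = (ent b T - (\<Sum>k\<in>UNIV. ent b (Re (quad M (f k))))) / T"
    proof -
      have "meas_entropy b f M' = - (\<Sum>k\<in>UNIV. ent b (Re (quad M (f k)) / T))"
        by (simp add: meas_entropy_ent qM' Re_divide_of_real)
      also have "\<dots> = (ent b T - (\<Sum>k\<in>UNIV. ent b (Re (quad M (f k))))) / T"
      proof -
        have X: "(\<Sum>k\<in>UNIV. ent b (Re (quad M (f k)) / T)) = ((\<Sum>k\<in>UNIV. ent b (Re (quad M (f k)))) - ent b T) / T"
          using psd by (intro ent_sum_div[OF b _ sf Tp]) auto
        show ?thesis unfolding X by (simp add: diff_divide_distrib)
      qed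
      finally show ?thesis .
    qed
    have Hh: "meas_entropy b h M' = (ent b T - (\<Sum>k\<in>UNIV. ent b (Re (quad M (h k))))) / T"
    proof -
      have "meas_entropy b h M' = - (\<Sum>k\<in>UNIV. ent b (Re (quad M (h k)) / T))"
        by (simp add: meas_entropy_ent qM' Re_divide_of_real)
      also have "\<dots> = (ent b T - (\<Sum>k\<in>UNIV. ent b (Re (quad M (h k))))) / T"
      proof -
        have X: "(\<Sum>k\<in>UNIV. ent b (Re (quad M (h k)) / T)) = ((\<Sum>k\<in>UNIV. ent b (Re (quad M (h k)))) - ent b T) / T"
          using psd by (intro ent_sum_div[OF b _ sh Tp]) auto
        show ?thesis unfolding X by (simp add: diff_divide_distrib)
      qed
      finally show ?thesis .
    qed
    have "c \<le> lam * meas_entropy b f M' + mu * meas_entropy b h M'" using hyp dens by blast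
    also have "\<dots> = (lam * (ent b T - (\<Sum>k\<in>UNIV. ent b (Re (quad M (f k)))))
       + mu * (ent b T - (\<Sum>k\<in>UNIV. ent b (Re (quad M (h k)))))) / T"
      unfolding Hf Hh by (simp add: add_divide_distrib)
    finally show ?thesis using Tp unfolding T_def[symmetric] by (simp add: pos_le_divide_eq mult.commute)
  qed
qed



definition tv :: "('a::finite \<Rightarrow> complex) \<Rightarrow> ('b::finite \<Rightarrow> complex) \<Rightarrow> ('a \<times> 'b \<Rightarrow> complex)" where
  "tv u w = (\<lambda>(x, y). u x * w y)"

definition condB :: "('a::finite \<times> 'b::finite \<Rightarrow> 'a \<times> 'b \<Rightarrow> complex) \<Rightarrow> ('a \<Rightarrow> complex) \<Rightarrow> 'b \<Rightarrow> 'b \<Rightarrow> complex" where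
  "condB \<rho> u = (\<lambda>y y'. \<Sum>x\<in>UNIV. \<Sum>x'\<in>UNIV. cnj (u x) * \<rho> (x, y) (x', y') * u x')"

definition condA :: "('a::finite \<times> 'b::finite \<Rightarrow> 'a \<times> 'b \<Rightarrow> complex) \<Rightarrow> ('b \<Rightarrow> complex) \<Rightarrow> 'a \<Rightarrow> 'a \<Rightarrow> complex" where
  "condA \<rho> w = (\<lambda>x x'. \<Sum>y\<in>UNIV. \<Sum>y'\<in>UNIV. cnj (w y) * \<rho> (x, y) (x', y') * w y')"

lemma sum_pair: "(\<Sum>p\<in>(UNIV::('a::finite \<times> 'b::finite) set). g p) = (\<Sum>i\<in>UNIV. \<Sum>k\<in>UNIV. g (i, k))"
  by (simp add: sum.cartesian_product UNIV_Times_UNIV[symmetric] del: UNIV_Times_UNIV)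

lemma quad_tv: "quad \<rho> (tv u w) =
   (\<Sum>x\<in>UNIV. \<Sum>y\<in>UNIV. \<Sum>x'\<in>UNIV. \<Sum>y'\<in>UNIV. cnj (u x) * cnj (w y) * \<rho> (x, y) (x', y') * (u x' * w y'))"
  by (simp add: quad_expand sum_pair tv_def sum_distrib_left sum_distrib_right)

lemma quad_condB: "quad (condB \<rho> u) w = quad \<rho> (tv u w)"
proof -
  let ?F = "\<lambda>x y x' y'. cnj (u x) * cnj (w y) * \<rho> (x, y) (x', y') * (u x' * w y')"
  have "quad (condB \<rho> u) w = (\<Sum>y\<in>UNIV. \<Sum>y'\<in>UNIV. \<Sum>x\<in>UNIV. \<Sum>x'\<in>UNIV. ?F x y x' y')"
    by (simp add: quad_expand condB_def sum_distrib_left sum_distrib_right mult_ac)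
  also have "\<dots> = (\<Sum>y\<in>UNIV. \<Sum>x\<in>UNIV. \<Sum>y'\<in>UNIV. \<Sum>x'\<in>UNIV. ?F x y x' y')"
    by (rule sum.cong[OF refl], rule sum.swap)
  also have "\<dots> = (\<Sum>x\<in>UNIV. \<Sum>y\<in>UNIV. \<Sum>y'\<in>UNIV. \<Sum>x'\<in>UNIV. ?F x y x' y')"
    by (rule sum.swap)
  also have "\<dots> = (\<Sum>x\<in>UNIV. \<Sum>y\<in>UNIV. \<Sum>x'\<in>UNIV. \<Sum>y'\<in>UNIV. ?F x y x' y')"
    by (rule sum.cong[OF refl], rule sum.cong[OF refl], rule sum.swap)
  also have "\<dots> = quad \<rho> (tv u w)" by (simp add: quad_tv)
  finally show ?thesis .
qed

lemma quad_condA: "quad (condA \<rho> w) u = quad \<rho> (tv u w)"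
proof -
  let ?F = "\<lambda>x y x' y'. cnj (u x) * cnj (w y) * \<rho> (x, y) (x', y') * (u x' * w y')"
  have "quad (condA \<rho> w) u = (\<Sum>x\<in>UNIV. \<Sum>x'\<in>UNIV. \<Sum>y\<in>UNIV. \<Sum>y'\<in>UNIV. ?F x y x' y')"
    by (simp add: quad_expand condA_def sum_distrib_left sum_distrib_right mult_ac)
  also have "\<dots> = (\<Sum>x\<in>UNIV. \<Sum>y\<in>UNIV. \<Sum>x'\<in>UNIV. \<Sum>y'\<in>UNIV. ?F x y x' y')"
    by (rule sum.cong[OF refl], rule sum.swap)
  also have "\<dots> = quad \<rho> (tv u w)" by (simp add: quad_tv)
  finally show ?thesis .
qed

lemma herm_condB:
  assumes "\<forall>p q. \<rho> q p = cnj (\<rho> p q)"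
  shows "\<forall>y y'. condB \<rho> u y' y = cnj (condB \<rho> u y y')"
proof (intro allI)
  fix y y'
  have "condB \<rho> u y' y = (\<Sum>x\<in>UNIV. \<Sum>x'\<in>UNIV. cnj (u x) * \<rho> (x, y') (x', y) * u x')"
    by (simp add: condB_def)
  also have "\<dots> = (\<Sum>x'\<in>UNIV. \<Sum>x\<in>UNIV. cnj (u x) * \<rho> (x, y') (x', y) * u x')"
    by (rule sum.swap)
  also have "\<dots> = cnj (condB \<rho> u y y')"
  proof -
    have h: "\<And>x x'. \<rho> (x, y') (x', y) = cnj (\<rho> (x', y) (x, y'))" using assms by blast
    show ?thesis by (simp add: condB_def h mult_ac)
  qed
  finally show "condB \<rho> u y' y = cnj (condB \<rho> u y y')" .
qed

lemma herm_condA: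
  assumes "\<forall>p q. \<rho> q p = cnj (\<rho> p q)"
  shows "\<forall>x x'. condA \<rho> w x' x = cnj (condA \<rho> w x x')"
proof (intro allI)
  fix x x'
  have "condA \<rho> w x' x = (\<Sum>y\<in>UNIV. \<Sum>y'\<in>UNIV. cnj (w y) * \<rho> (x', y) (x, y') * w y')"
    by (simp add: condA_def)
  also have "\<dots> = (\<Sum>y'\<in>UNIV. \<Sum>y\<in>UNIV. cnj (w y) * \<rho> (x', y) (x, y') * w y')"
    by (rule sum.swap)
  also have "\<dots> = cnj (condA \<rho> w x x')"
  proof -
    have h: "\<And>y y'. \<rho> (x', y) (x, y') = cnj (\<rho> (x, y') (x', y))" using assms by blast
    show ?thesis by (simp add: condA_def h mult_ac)
  qed
  finally show "condA \<rho> w x' x = cnj (condA \<rho> w x x')" .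
qed

lemma tensor_basis_tv: "tensor_basis e f (i, k) = tv (e i) (f k)"
  by (simp add: tensor_basis_def tv_def)

lemma onb_tensor:
  assumes "onb e" "onb f"
  shows "onb (tensor_basis e f)"
  unfolding onb_def
proof (intro allI)
  fix p q :: "'a::finite \<times> 'b::finite"
  obtain i k where p: "p = (i, k)" by force
  obtain i' k' where q: "q = (i', k')" by force
  have "cinner_fun (tensor_basis e f p) (tensor_basis e f q)
      = cinner_fun (e i) (e i') * cinner_fun (f k) (f k')"
    unfolding p q cinner_fun_def tensor_basis_def
    by (simp add: sum_pair sum_product mult_ac)
  thus "cinner_fun (tensor_basis e f p) (tensor_basis e f q) = (if p = q then 1 else 0)"
    using assms unfolding onb_def p q by simp
qed



lemma ent_eq: "ent b p = p * log b p"
  by (simp add: ent_def)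

lemma term_bound:
  fixes R t s b :: real
  assumes b: "b > 1" and R: "R \<ge> 0" "R \<le> t" "R \<le> s"
  shows "R * log b R - R * log b t - R * log b s \<ge> (R - t * s) / ln b"
proof (cases "R = 0")
  case True
  have "t * s \<ge> 0" using R by simp
  moreover have "ln b > 0" using b by simp
  ultimately have "(R - t * s) / ln b \<le> 0" using True by (simp add: divide_nonpos_pos)
  thus ?thesis using True by simp
next
  case False
  hence Rp: "R > 0" using R by simp
  have tp: "t > 0" "s > 0" using Rp R by auto
  have lb: "ln b > 0" using b by simp
  have "ln (t * s / R) \<le> t * s / R - 1" using tp Rp by (intro ln_le_minus_one) simp
  hence "R * ln (t * s / R) \<le> R * (t * s / R - 1)" using Rp by (intro mult_left_mono) auto
  also have "R * (t * s / R - 1) = t * s - R" using Rp by (simp add: right_diff_distrib)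
  finally have A: "R * ln (t * s / R) \<le> t * s - R" .
  have L: "ln (t * s / R) = ln t + ln s - ln R" using tp Rp by (simp add: ln_div ln_mult)
  have "R * log b R - R * log b t - R * log b s = (R * ln R - R * ln t - R * ln s) / ln b"
    by (simp add: log_def diff_divide_distrib)
  also have "\<dots> = - (R * ln (t * s / R)) / ln b"
    unfolding L by (simp add: algebra_simps)
  finally have B: "R * log b R - R * log b t - R * log b s = - (R * ln (t * s / R)) / ln b" .
  have "(R - t * s) / ln b \<le> - (R * ln (t * s / R)) / ln b"
    using A lb by (intro divide_right_mono) auto
  thus ?thesis using B by simp
qed

lemma subadd:
  fixes R :: "'a::finite \<Rightarrow> 'b::finite \<Rightarrow> real"
  assumes b: "b > 1" and R0: "\<And>i l. R i l \<ge> 0" and R1: "(\<Sum>i\<in>UNIV. \<Sum>l\<in>UNIV. R i l) = 1"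
  shows "(\<Sum>i\<in>UNIV. ent b (\<Sum>l\<in>UNIV. R i l)) + (\<Sum>l\<in>UNIV. ent b (\<Sum>i\<in>UNIV. R i l))
         \<le> (\<Sum>i\<in>UNIV. \<Sum>l\<in>UNIV. ent b (R i l))"
proof -
  define t where "t i = (\<Sum>l\<in>UNIV. R i l)" for i
  define s where "s l = (\<Sum>i\<in>UNIV. R i l)" for l
  have st: "(\<Sum>i\<in>UNIV. t i) = 1" using R1 by (simp add: t_def)
  have ss: "(\<Sum>l\<in>UNIV. s l) = 1" unfolding s_def using R1 sum.swap[of "\<lambda>i l. R i l" UNIV UNIV] by simp
  have Rt: "R i l \<le> t i" for i l unfolding t_def
    by (rule member_le_sum) (auto simp: R0)
  have Rs: "R i l \<le> s l" for i l unfolding s_def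
    by (rule member_le_sum[where f="\<lambda>i. R i l"]) (auto simp: R0)
  have E1: "(\<Sum>i\<in>UNIV. ent b (t i)) = (\<Sum>i\<in>UNIV. \<Sum>l\<in>UNIV. R i l * log b (t i))"
    by (simp add: ent_eq t_def sum_distrib_right)
  have E2: "(\<Sum>l\<in>UNIV. ent b (s l)) = (\<Sum>i\<in>UNIV. \<Sum>l\<in>UNIV. R i l * log b (s l))"
  proof -
    have "(\<Sum>l\<in>UNIV. ent b (s l)) = (\<Sum>l\<in>UNIV. \<Sum>i\<in>UNIV. R i l * log b (s l))"
      by (simp add: ent_eq s_def sum_distrib_right)
    also have "\<dots> = (\<Sum>i\<in>UNIV. \<Sum>l\<in>UNIV. R i l * log b (s l))" by (rule sum.swap)
    finally show ?thesis .
  qed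
  have "(\<Sum>i\<in>UNIV. \<Sum>l\<in>UNIV. (R i l - t i * s l) / ln b)
      \<le> (\<Sum>i\<in>UNIV. \<Sum>l\<in>UNIV. R i l * log b (R i l) - R i l * log b (t i) - R i l * log b (s l))"
    by (intro sum_mono term_bound[OF b R0 Rt Rs])
  moreover have "(\<Sum>i\<in>UNIV. \<Sum>l\<in>UNIV. (R i l - t i * s l) / ln b) = 0"
  proof -
    have "(\<Sum>i\<in>UNIV. \<Sum>l\<in>UNIV. t i * s l) = 1"
      using st ss by (simp add: sum_product[symmetric])
    hence "(\<Sum>i\<in>UNIV. \<Sum>l\<in>UNIV. (R i l - t i * s l)) = 0"
      using R1 by (simp add: sum_subtractf)
    thus ?thesis by (simp add: sum_divide_distrib[symmetric])
  qed
  ultimately have "0 \<le> (\<Sum>i\<in>UNIV. \<Sum>l\<in>UNIV. R i l * log b (R i l) - R i l * log b (t i) - R i l * log b (s l))"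
    by simp
  also have "\<dots> = (\<Sum>i\<in>UNIV. \<Sum>l\<in>UNIV. ent b (R i l)) - (\<Sum>i\<in>UNIV. ent b (t i)) - (\<Sum>l\<in>UNIV. ent b (s l))"
    unfolding E1 E2 by (simp add: ent_eq sum_subtractf)
  finally show ?thesis unfolding t_def s_def by simp
qed



lemma density_herm: "density \<rho> \<Longrightarrow> \<forall>p q. \<rho> q p = cnj (\<rho> p q)"
  unfolding density_def by blast

lemma density_psd: "density \<rho> \<Longrightarrow> \<forall>v. Im (quad \<rho> v) = 0 \<and> 0 \<le> Re (quad \<rho> v)"
  unfolding density_def quad_def by blast

lemma density_trace: "density \<rho> \<Longrightarrow> trace \<rho> = 1"
  unfolding density_def trace_def by blast

lemma meas_entropy_tensor:
  "meas_entropy b (tensor_basis e f) \<rho> = - (\<Sum>i\<in>UNIV. \<Sum>k\<in>UNIV. ent b (Re (quad \<rho> (tv (e i) (f k)))))"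
  by (simp add: meas_entropy_ent sum_pair tensor_basis_tv)

lemma part1:
  fixes \<rho> :: "('a::finite \<times> 'b::finite) \<Rightarrow> ('a \<times> 'b) \<Rightarrow> complex"
    and e g :: "'a \<Rightarrow> 'a \<Rightarrow> complex" and f h :: "'b \<Rightarrow> 'b \<Rightarrow> complex"
  assumes b: "b > 1" and lam: "lam > 0" and mu: "mu > 0"
    and oe: "onb e" and og: "onb g" and of: "onb f" and oh: "onb h"
    and hA: "\<forall>\<rho>::'a \<Rightarrow> 'a \<Rightarrow> complex. density \<rho> \<longrightarrow>
               lam * meas_entropy b e \<rho> + mu * meas_entropy b g \<rho> \<ge> cA"
    and hB: "\<forall>\<rho>::'b \<Rightarrow> 'b \<Rightarrow> complex. density \<rho> \<longrightarrow>
               lam * meas_entropy b f \<rho> + mu * meas_entropy b h \<rho> \<ge> cB"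
    and d: "density \<rho>"
  shows "lam * meas_entropy b (tensor_basis e f) \<rho> + mu * meas_entropy b (tensor_basis g h) \<rho> \<ge> cA + cB"
proof -
  have herm: "\<forall>p q. \<rho> q p = cnj (\<rho> p q)" using d by (rule density_herm)
  have psd: "\<forall>v. Im (quad \<rho> v) = 0 \<and> 0 \<le> Re (quad \<rho> v)" using d by (rule density_psd)
  define P where "P i k = Re (quad \<rho> (tv (e i) (f k)))" for i k
  define R where "R i l = Re (quad \<rho> (tv (e i) (h l)))" for i l
  define Q where "Q j l = Re (quad \<rho> (tv (g j) (h l)))" for j l
  define t where "t i = Re (trace (condB \<rho> (e i)))" for i
  define s where "s l = Re (trace (condA \<rho> (h l)))" for l
  have R0: "R i l \<ge> 0" for i l using psd by (simp add: R_def)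
  have tR: "t i = (\<Sum>l\<in>UNIV. R i l)" for i
    using trace_onb[OF oh, of "condB \<rho> (e i)"] unfolding t_def R_def
    by (simp add: quad_condB Re_sum[symmetric])
  have sR: "s l = (\<Sum>i\<in>UNIV. R i l)" for l
    using trace_onb[OF oe, of "condA \<rho> (h l)"] unfolding s_def R_def
    by (simp add: quad_condA Re_sum[symmetric])
  have R1: "(\<Sum>i\<in>UNIV. \<Sum>l\<in>UNIV. R i l) = 1"
  proof -
    have "(\<Sum>p\<in>UNIV. quad \<rho> (tensor_basis e h p)) = 1"
      using trace_onb[OF onb_tensor[OF oe oh], of \<rho>] density_trace[OF d] by simp
    hence "(\<Sum>i\<in>UNIV. \<Sum>l\<in>UNIV. quad \<rho> (tv (e i) (h l))) = 1"
      by (simp add: sum_pair tensor_basis_tv)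
    hence "Re (\<Sum>i\<in>UNIV. \<Sum>l\<in>UNIV. quad \<rho> (tv (e i) (h l))) = 1" by simp
    thus ?thesis by (simp add: R_def)
  qed
  have st: "(\<Sum>i\<in>UNIV. t i) = 1" using R1 tR by simp
  have ss: "(\<Sum>l\<in>UNIV. s l) = 1"
    using R1 sR sum.swap[of "\<lambda>i l. R i l" UNIV UNIV] by simp
  have C1: "t i * cB \<le> lam * (ent b (t i) - (\<Sum>k\<in>UNIV. ent b (P i k)))
                      + mu * (ent b (t i) - (\<Sum>l\<in>UNIV. ent b (R i l)))" for i
  proof -
    have psdB: "\<forall>v. Im (quad (condB \<rho> (e i)) v) = 0 \<and> 0 \<le> Re (quad (condB \<rho> (e i)) v)"
      using psd by (simp add: quad_condB)
    show ?thesis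
      using generic_cond[OF b herm_condB[OF herm] psdB of oh hB]
      unfolding t_def P_def R_def by (simp add: quad_condB)
  qed
  have C2: "s l * cA \<le> lam * (ent b (s l) - (\<Sum>i\<in>UNIV. ent b (R i l)))
                      + mu * (ent b (s l) - (\<Sum>j\<in>UNIV. ent b (Q j l)))" for l
  proof -
    have psdA: "\<forall>v. Im (quad (condA \<rho> (h l)) v) = 0 \<and> 0 \<le> Re (quad (condA \<rho> (h l)) v)"
      using psd by (simp add: quad_condA)
    show ?thesis
      using generic_cond[OF b herm_condA[OF herm] psdA oe og hA]
      unfolding s_def Q_def R_def by (simp add: quad_condA)
  qed
  define Et where "Et = (\<Sum>i\<in>UNIV. ent b (t i))"
  define Es where "Es = (\<Sum>l\<in>UNIV. ent b (s l))"
  define XX where "XX = (\<Sum>i\<in>UNIV. \<Sum>k\<in>UNIV. ent b (P i k))"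
  define XR where "XR = (\<Sum>i\<in>UNIV. \<Sum>l\<in>UNIV. ent b (R i l))"
  define XQ where "XQ = (\<Sum>l\<in>UNIV. \<Sum>j\<in>UNIV. ent b (Q j l))"
  have S1: "cB \<le> lam * (Et - XX) + mu * (Et - XR)"
  proof -
    have "(\<Sum>i\<in>UNIV. t i * cB) \<le> (\<Sum>i\<in>UNIV. lam * (ent b (t i) - (\<Sum>k\<in>UNIV. ent b (P i k)))
                      + mu * (ent b (t i) - (\<Sum>l\<in>UNIV. ent b (R i l))))"
      by (rule sum_mono) (rule C1)
    also have "\<dots> = lam * (Et - XX) + mu * (Et - XR)"
      unfolding Et_def XX_def XR_def by (simp add: sum.distrib sum_subtractf sum_distrib_left[symmetric])
    also have "(\<Sum>i\<in>UNIV. t i * cB) = cB" using st by (simp add: sum_distrib_right[symmetric])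
    ultimately show ?thesis by simp
  qed
  have S2: "cA \<le> lam * (Es - XR) + mu * (Es - XQ)"
  proof -
    have "(\<Sum>l\<in>UNIV. s l * cA) \<le> (\<Sum>l\<in>UNIV. lam * (ent b (s l) - (\<Sum>i\<in>UNIV. ent b (R i l)))
                      + mu * (ent b (s l) - (\<Sum>j\<in>UNIV. ent b (Q j l))))"
      by (rule sum_mono) (rule C2)
    also have "\<dots> = lam * (Es - (\<Sum>l\<in>UNIV. \<Sum>i\<in>UNIV. ent b (R i l))) + mu * (Es - XQ)"
      unfolding Es_def XQ_def by (simp add: sum.distrib sum_subtractf sum_distrib_left[symmetric])
    also have "(\<Sum>l\<in>UNIV. \<Sum>i\<in>UNIV. ent b (R i l)) = XR"
      unfolding XR_def by (rule sum.swap)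
    also have "(\<Sum>l\<in>UNIV. s l * cA) = cA" using ss by (simp add: sum_distrib_right[symmetric])
    finally show ?thesis by simp
  qed
  have SA: "Et + Es \<le> XR"
    using subadd[OF b R0 R1] unfolding Et_def Es_def XR_def tR sR by simp
  have n1: "lam * (Et + Es - XR) \<le> 0" using lam SA by (intro mult_nonneg_nonpos) auto
  have n2: "mu * (Et + Es - XR) \<le> 0" using mu SA by (intro mult_nonneg_nonpos) auto
  have HXX: "meas_entropy b (tensor_basis e f) \<rho> = - XX"
    unfolding meas_entropy_tensor XX_def P_def ..
  have HYY: "meas_entropy b (tensor_basis g h) \<rho> = - XQ"
    unfolding meas_entropy_tensor XQ_def Q_def by (simp add: sum.swap[of "\<lambda>j l. ent b (Re (quad \<rho> (tv (g j) (h l))))"])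
  show ?thesis
    unfolding HXX HYY using S1 S2 n1 n2
    unfolding right_diff_distrib distrib_left by linarith
qed



lemma dsum_delta2: "(\<Sum>x\<in>(UNIV::'n::finite set). \<Sum>y\<in>(UNIV::'m::finite set). if x = a \<and> y = b then c else 0) = c"
proof -
  have "\<And>x. (\<Sum>y\<in>(UNIV::'m set). if x = a \<and> y = b then c else 0) = (if x = a then c else 0)"
    by (cases "x = a") auto
  thus ?thesis by simp
qed

lemma dsum_delta1: "(\<Sum>x\<in>(UNIV::'n::finite set). \<Sum>y\<in>(UNIV::'m::finite set). if x = a then F y else 0) = (\<Sum>y\<in>UNIV. F y)"
proof -
  have "\<And>x. (\<Sum>y\<in>(UNIV::'m set). if x = a then F y else 0) = (if x = a then (\<Sum>y\<in>UNIV. F y) else 0)"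
    by (cases "x = a") auto
  thus ?thesis by simp
qed

lemma quad_add_delta:
  fixes \<rho> :: "'n::finite \<Rightarrow> 'n \<Rightarrow> complex"
  shows "quad \<rho> (\<lambda>x. v x + (if x = a then s else 0)) =
    quad \<rho> v + cnj s * (\<Sum>y\<in>UNIV. \<rho> a y * v y) + s * (\<Sum>x\<in>UNIV. cnj (v x) * \<rho> x a) + cnj s * s * \<rho> a a"
proof -
  have e: "cnj (v x + (if x = a then s else 0)) * \<rho> x y * (v y + (if y = a then s else 0))
     = cnj (v x) * \<rho> x y * v y + (if y = a then cnj (v x) * \<rho> x a * s else 0)
       + (if x = a then cnj s * \<rho> a y * v y else 0)
       + (if x = a \<and> y = a then cnj s * s * \<rho> a a else 0)" for x y
    by (auto simp: algebra_simps)
  have "quad \<rho> (\<lambda>x. v x + (if x = a then s else 0)) =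
     (\<Sum>x\<in>UNIV. \<Sum>y\<in>UNIV. cnj (v x) * \<rho> x y * v y + (if y = a then cnj (v x) * \<rho> x a * s else 0)
       + (if x = a then cnj s * \<rho> a y * v y else 0)
       + (if x = a \<and> y = a then cnj s * s * \<rho> a a else 0))"
    unfolding quad_expand e ..
  also have "\<dots> = quad \<rho> v + (\<Sum>x\<in>UNIV. cnj (v x) * \<rho> x a * s) + (\<Sum>y\<in>UNIV. cnj s * \<rho> a y * v y)
       + cnj s * s * \<rho> a a"
    by (simp add: sum.distrib quad_expand dsum_delta1 dsum_delta2)
  finally show ?thesis by (simp add: sum_distrib_left sum_distrib_right mult_ac)
qed

lemma quad_delta: "quad \<rho> (\<lambda>x. if x = y then 1 else 0) = \<rho> y y"
proof -
  have "cnj (if x = y then 1 else 0) * \<rho> x z * (if z = y then 1 else 0) = (if x = y \<and> z = y then \<rho> y y else 0)" for x z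
    by auto
  thus ?thesis by (simp add: quad_expand dsum_delta2)
qed



lemma sum_delta_r: "(\<Sum>x\<in>(UNIV::'n::finite set). f x * (if x = y then 1 else 0)) = (f y :: complex)"
proof -
  have "f x * (if x = y then 1 else 0) = (if x = y then f y else 0)" for x by auto
  thus ?thesis by simp
qed

lemma sum_delta_l: "(\<Sum>x\<in>(UNIV::'n::finite set). cnj (if x = y then 1 else 0) * g x) = (g y :: complex)"
proof -
  have "cnj (if x = y then 1 else 0) * g x = (if x = y then g y else 0)" for x by auto
  thus ?thesis by simp
qed

lemma quad_rank1_sub:
  fixes \<rho> :: "'n::finite \<Rightarrow> 'n \<Rightarrow> complex"
  shows "quad (\<lambda>x y. \<rho> x y - \<rho> x a * \<rho> a y / c0) v
     = quad \<rho> v - (\<Sum>x\<in>UNIV. cnj (v x) * \<rho> x a) * (\<Sum>y\<in>UNIV. \<rho> a y * v y) / c0"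
proof -
  have "quad (\<lambda>x y. \<rho> x y - \<rho> x a * \<rho> a y / c0) v
      = quad \<rho> v - (\<Sum>x\<in>UNIV. \<Sum>y\<in>UNIV. (cnj (v x) * \<rho> x a) * (\<rho> a y * v y) / c0)"
    by (simp add: quad_expand sum_subtractf right_diff_distrib left_diff_distrib mult_ac)
  also have "(\<Sum>x\<in>UNIV. \<Sum>y\<in>UNIV. (cnj (v x) * \<rho> x a) * (\<rho> a y * v y) / c0)
      = (\<Sum>x\<in>UNIV. cnj (v x) * \<rho> x a) * (\<Sum>y\<in>UNIV. \<rho> a y * v y) / c0"
    by (simp add: sum_product sum_divide_distrib)
  finally show ?thesis .
qed

lemma decomp_set:
  fixes S :: "'n::finite set"
  assumes "finite S"
  shows "\<forall>\<rho>::'n\<Rightarrow>'n\<Rightarrow>complex. (\<forall>x y. \<rho> y x = cnj (\<rho> x y)) \<and> (\<forall>v. 0 \<le> Re (quad \<rho> v))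
     \<and> (\<forall>x y. x \<notin> S \<or> y \<notin> S \<longrightarrow> \<rho> x y = 0)
     \<longrightarrow> (\<exists>W (m::nat). \<forall>x y. \<rho> x y = (\<Sum>k<m. W k x * cnj (W k y)))"
  using assms
proof (induction S rule: finite_induct)
  case empty
  show ?case
  proof (intro allI impI)
    fix \<rho> :: "'n\<Rightarrow>'n\<Rightarrow>complex"
    assume "(\<forall>x y. \<rho> y x = cnj (\<rho> x y)) \<and> (\<forall>v. 0 \<le> Re (quad \<rho> v)) \<and> (\<forall>x y. x \<notin> {} \<or> y \<notin> {} \<longrightarrow> \<rho> x y = 0)"
    hence "\<forall>x y. \<rho> x y = 0" by blast
    thus "\<exists>W (m::nat). \<forall>x y. \<rho> x y = (\<Sum>k<m. W k x * cnj (W k y))"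
      by (intro exI[of _ "\<lambda>k x. 0"] exI[of _ 0]) simp
  qed
next
  case (insert a S)
  show ?case
  proof (intro allI impI)
    fix \<rho> :: "'n\<Rightarrow>'n\<Rightarrow>complex"
    assume H: "(\<forall>x y. \<rho> y x = cnj (\<rho> x y)) \<and> (\<forall>v. 0 \<le> Re (quad \<rho> v)) \<and> (\<forall>x y. x \<notin> insert a S \<or> y \<notin> insert a S \<longrightarrow> \<rho> x y = 0)"
    have herm: "\<And>x y. \<rho> y x = cnj (\<rho> x y)" using H by blast
    have psd: "\<And>v. 0 \<le> Re (quad \<rho> v)" using H by blast
    have supp: "\<And>x y. x \<notin> insert a S \<or> y \<notin> insert a S \<Longrightarrow> \<rho> x y = 0" using H by blast
    define d where "d = Re (\<rho> a a)"
    have aa: "\<rho> a a = complex_of_real d"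
    proof -
      have "Im (\<rho> a a) = 0" using herm[of a a] by (metis cnj.simps(2) neg_equal_zero)
      thus ?thesis unfolding d_def by (simp add: complex_eq_iff)
    qed
    have d0: "d \<ge> 0" using psd[of "\<lambda>x. if x = a then 1 else 0"] unfolding quad_delta d_def .
    show "\<exists>W (m::nat). \<forall>x y. \<rho> x y = (\<Sum>k<m. W k x * cnj (W k y))"
    proof (cases "d = 0")
      case True
      have z: "\<rho> a y = 0" for y
      proof (rule ccontr)
        assume nz: "\<rho> a y \<noteq> 0"
        define z where "z = \<rho> a y"
        have nz2: "(cmod z)\<^sup>2 > 0" using nz unfolding z_def by simp
        define t where "t = (\<bar>Re (\<rho> y y)\<bar> + 1) / (2 * (cmod z)\<^sup>2)"
        define s where "s = - (complex_of_real t * z)"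
        have ya: "\<rho> y a = cnj z" unfolding z_def by (rule herm)
        have "quad \<rho> (\<lambda>x. (if x = y then 1 else 0) + (if x = a then s else 0))
            = \<rho> y y + cnj s * z + s * cnj z"
          unfolding quad_add_delta quad_delta sum_delta_r sum_delta_l
          using True aa ya unfolding z_def by simp
        also have "\<dots> = \<rho> y y - complex_of_real (2 * t * (cmod z)\<^sup>2)"
        proof -
          have zz: "z * cnj z = complex_of_real ((cmod z)\<^sup>2)"
            by (metis complex_norm_square of_real_power)
          have zz': "cnj z * z = complex_of_real ((cmod z)\<^sup>2)" using zz by (simp add: mult.commute)
          show ?thesis unfolding s_def by (simp add: algebra_simps zz zz')
        qed
        finally have q: "Re (quad \<rho> (\<lambda>x. (if x = y then 1 else 0) + (if x = a then s else 0)))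
            = Re (\<rho> y y) - 2 * t * (cmod z)\<^sup>2" by simp
        have "2 * t * (cmod z)\<^sup>2 = \<bar>Re (\<rho> y y)\<bar> + 1" unfolding t_def using nz2 by simp
        hence "Re (quad \<rho> (\<lambda>x. (if x = y then 1 else 0) + (if x = a then s else 0))) < 0"
          unfolding q by linarith
        thus False using psd by (metis not_le)
      qed
      have supp': "\<forall>x y. x \<notin> S \<or> y \<notin> S \<longrightarrow> \<rho> x y = 0"
      proof (intro allI impI)
        fix x y assume xy: "x \<notin> S \<or> y \<notin> S"
        show "\<rho> x y = 0"
        proof (cases "x = a")
          case True thus ?thesis using z by simp
        next
          case xa: False
          show ?thesis
          proof (cases "y = a")
            case True thus ?thesis using herm[of a x] z[of x] by simp
          next
            case False thus ?thesis using xa xy supp by blast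
          qed
        qed
      qed
      show ?thesis by (rule insert.IH[rule_format], intro conjI) (use H supp' in blast)+
    next
      case False
      hence dp: "d > 0" using d0 by simp
      define c0 where "c0 = complex_of_real d"
      have c0nz: "c0 \<noteq> 0" using dp unfolding c0_def by simp
      define \<rho>' where "\<rho>' = (\<lambda>x y. \<rho> x y - \<rho> x a * \<rho> a y / c0)"
      define w where "w = (\<lambda>x. \<rho> x a / complex_of_real (sqrt d))"
      have ww: "w x * cnj (w y) = \<rho> x a * \<rho> a y / c0" for x y
      proof -
        have "cnj (\<rho> y a) = \<rho> a y" using herm[of a y] by simp
        moreover have "complex_of_real (sqrt d) * complex_of_real (sqrt d) = c0"
          using dp unfolding c0_def by (simp flip: of_real_mult)
        ultimately show ?thesis unfolding w_def by (simp add: field_simps)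
      qed
      have herm': "\<forall>x y. \<rho>' y x = cnj (\<rho>' x y)"
      proof (intro allI)
        fix x y
        have "cnj (\<rho> x a * \<rho> a y / c0) = \<rho> y a * \<rho> a x / c0"
          using herm[of a x] herm[of y a] unfolding c0_def by (simp add: mult.commute)
        thus "\<rho>' y x = cnj (\<rho>' x y)" unfolding \<rho>'_def using herm[of x y] by simp
      qed
      have psd': "\<forall>v. 0 \<le> Re (quad \<rho>' v)"
      proof
        fix v
        define c where "c = (\<Sum>y\<in>UNIV. \<rho> a y * v y)"
        have cc: "(\<Sum>x\<in>UNIV. cnj (v x) * \<rho> x a) = cnj c"
        proof -
          have hx: "\<And>x. \<rho> x a = cnj (\<rho> a x)" using herm by blast
          show ?thesis unfolding c_def hx by (simp add: mult.commute)
        qed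
        define s where "s = - c / c0"
        have cs: "cnj s = - cnj c / c0" unfolding s_def c0_def by simp
        have "quad \<rho> (\<lambda>x. v x + (if x = a then s else 0)) = quad \<rho> v + cnj s * c + s * cnj c + cnj s * s * c0"
          unfolding quad_add_delta c_def[symmetric] cc aa c0_def ..
        also have "\<dots> = quad \<rho> v - cnj c * c / c0"
          unfolding cs s_def using c0nz by (simp add: field_simps)
        also have "\<dots> = quad \<rho>' v"
          unfolding \<rho>'_def quad_rank1_sub c_def[symmetric] cc ..
        finally show "0 \<le> Re (quad \<rho>' v)" using psd by metis
      qed
      have supp': "\<forall>x y. x \<notin> S \<or> y \<notin> S \<longrightarrow> \<rho>' x y = 0"
      proof (intro allI impI)
        fix x y assume xy: "x \<notin> S \<or> y \<notin> S"
        show "\<rho>' x y = 0"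
        proof (cases "x = a")
          case True thus ?thesis unfolding \<rho>'_def using aa c0nz unfolding c0_def by simp
        next
          case xa: False
          show ?thesis
          proof (cases "y = a")
            case True thus ?thesis unfolding \<rho>'_def using aa c0nz unfolding c0_def by simp
          next
            case False
            hence "x \<notin> insert a S \<or> y \<notin> insert a S" using xa xy by blast
            hence "\<rho> x y = 0" by (rule supp)
            moreover have "\<rho> x a = 0 \<or> \<rho> a y = 0"
              using supp[of x a] supp[of a y] xa False xy by blast
            ultimately show ?thesis unfolding \<rho>'_def by auto
          qed
        qed
      qed
      obtain W and m :: nat where Wm: "\<forall>x y. \<rho>' x y = (\<Sum>k<m. W k x * cnj (W k y))"
        using insert.IH[rule_format, OF conjI[OF herm' conjI[OF psd' supp']]] by blast
      define W2 where "W2 = (\<lambda>k. if k < m then W k else w)"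
      have "\<forall>x y. \<rho> x y = (\<Sum>k<Suc m. W2 k x * cnj (W2 k y))"
      proof (intro allI)
        fix x y
        have "\<rho> x y = \<rho>' x y + w x * cnj (w y)" unfolding \<rho>'_def ww by simp
        also have "\<dots> = (\<Sum>k<m. W2 k x * cnj (W2 k y)) + W2 m x * cnj (W2 m y)"
          using Wm unfolding W2_def by simp
        finally show "\<rho> x y = (\<Sum>k<Suc m. W2 k x * cnj (W2 k y))" by simp
      qed
      thus ?thesis by blast
    qed
  qed
qed

lemma psd_decomp:
  fixes \<rho> :: "'n::finite \<Rightarrow> 'n \<Rightarrow> complex"
  assumes "\<forall>x y. \<rho> y x = cnj (\<rho> x y)" "\<forall>v. 0 \<le> Re (quad \<rho> v)"
  shows "\<exists>W (m::nat). \<forall>x y. \<rho> x y = (\<Sum>k<m. W k x * cnj (W k y))"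
proof (rule decomp_set[of UNIV, rule_format])
  show "finite (UNIV::'n set)" by simp
  show "(\<forall>x y. \<rho> y x = cnj (\<rho> x y)) \<and> (\<forall>v. 0 \<le> Re (quad \<rho> v)) \<and> (\<forall>x y. x \<notin> UNIV \<or> y \<notin> UNIV \<longrightarrow> \<rho> x y = 0)"
    using assms by blast
qed



definition prodm :: "('a::finite \<Rightarrow> 'a \<Rightarrow> complex) \<Rightarrow> ('b::finite \<Rightarrow> 'b \<Rightarrow> complex) \<Rightarrow> ('a \<times> 'b) \<Rightarrow> ('a \<times> 'b) \<Rightarrow> complex" where
  "prodm A B = (\<lambda>p q. A (fst p) (fst q) * B (snd p) (snd q))"

definition Nm :: "('b::finite \<Rightarrow> 'b \<Rightarrow> complex) \<Rightarrow> ('a::finite \<times> 'b \<Rightarrow> complex) \<Rightarrow> 'a \<Rightarrow> 'a \<Rightarrow> complex" where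
  "Nm B v = (\<lambda>x x'. \<Sum>y\<in>UNIV. \<Sum>y'\<in>UNIV. cnj (v (x, y)) * B y y' * v (x', y'))"

lemma L1: "quad (prodm A B) v = (\<Sum>x\<in>UNIV. \<Sum>x'\<in>UNIV. A x x' * Nm B v x x')"
proof -
  let ?F = "\<lambda>x y x' y'. A x x' * (cnj (v (x, y)) * B y y' * v (x', y'))"
  have "quad (prodm A B) v = (\<Sum>x\<in>UNIV. \<Sum>y\<in>UNIV. \<Sum>x'\<in>UNIV. \<Sum>y'\<in>UNIV. ?F x y x' y')"
    by (simp add: quad_expand sum_pair prodm_def mult_ac)
  also have "\<dots> = (\<Sum>x\<in>UNIV. \<Sum>x'\<in>UNIV. \<Sum>y\<in>UNIV. \<Sum>y'\<in>UNIV. ?F x y x' y')"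
    by (rule sum.cong[OF refl], rule sum.swap)
  also have "\<dots> = (\<Sum>x\<in>UNIV. \<Sum>x'\<in>UNIV. A x x' * Nm B v x x')"
    by (simp add: Nm_def sum_distrib_left)
  finally show ?thesis .
qed

lemma L2:
  assumes "\<forall>x x'. A x x' = (\<Sum>k<m. W k x * cnj (W k x'))"
  shows "(\<Sum>x\<in>UNIV. \<Sum>x'\<in>UNIV. A x x' * N x x') = (\<Sum>k<m. quad N (\<lambda>x. cnj (W k x)))"
proof -
  let ?F = "\<lambda>k x x'. W k x * N x x' * cnj (W k x')"
  have "(\<Sum>x\<in>UNIV. \<Sum>x'\<in>UNIV. A x x' * N x x') = (\<Sum>x\<in>UNIV. \<Sum>x'\<in>UNIV. \<Sum>k<m. ?F k x x')"
    using assms by (simp add: sum_distrib_left mult_ac)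
  also have "\<dots> = (\<Sum>x\<in>UNIV. \<Sum>k<m. \<Sum>x'\<in>UNIV. ?F k x x')"
    by (rule sum.cong[OF refl], rule sum.swap)
  also have "\<dots> = (\<Sum>k<m. \<Sum>x\<in>UNIV. \<Sum>x'\<in>UNIV. ?F k x x')"
    by (rule sum.swap)
  also have "\<dots> = (\<Sum>k<m. quad N (\<lambda>x. cnj (W k x)))"
    by (simp add: quad_expand)
  finally show ?thesis .
qed

lemma L3: "quad (Nm B v) c = quad B (\<lambda>y. \<Sum>x\<in>UNIV. c x * v (x, y))"
proof -
  let ?F = "\<lambda>x x' y y'. cnj (c x) * cnj (v (x, y)) * B y y' * (c x' * v (x', y'))"
  have "quad (Nm B v) c = (\<Sum>x\<in>UNIV. \<Sum>x'\<in>UNIV. \<Sum>y\<in>UNIV. \<Sum>y'\<in>UNIV. ?F x x' y y')"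
    by (simp add: quad_expand Nm_def sum_distrib_left sum_distrib_right mult_ac)
  also have "\<dots> = (\<Sum>x\<in>UNIV. \<Sum>y\<in>UNIV. \<Sum>x'\<in>UNIV. \<Sum>y'\<in>UNIV. ?F x x' y y')"
    by (rule sum.cong[OF refl], rule sum.swap)
  also have "\<dots> = (\<Sum>y\<in>UNIV. \<Sum>x\<in>UNIV. \<Sum>x'\<in>UNIV. \<Sum>y'\<in>UNIV. ?F x x' y y')"
    by (rule sum.swap)
  also have "\<dots> = (\<Sum>y\<in>UNIV. \<Sum>x\<in>UNIV. \<Sum>y'\<in>UNIV. \<Sum>x'\<in>UNIV. ?F x x' y y')"
    by (rule sum.cong[OF refl], rule sum.cong[OF refl], rule sum.swap)
  also have "\<dots> = (\<Sum>y\<in>UNIV. \<Sum>y'\<in>UNIV. \<Sum>x\<in>UNIV. \<Sum>x'\<in>UNIV. ?F x x' y y')"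
    by (rule sum.cong[OF refl], rule sum.swap)
  also have "\<dots> = quad B (\<lambda>y. \<Sum>x\<in>UNIV. c x * v (x, y))"
    by (simp add: quad_expand sum_distrib_left sum_distrib_right mult_ac)
  finally show ?thesis .
qed

lemma quad_prodm_tv: "quad (prodm A B) (tv u w) = quad A u * quad B w"
proof -
  let ?F = "\<lambda>x y x' y'. cnj (u x) * A x x' * u x' * (cnj (w y) * B y y' * w y')"
  have "quad (prodm A B) (tv u w) = (\<Sum>x\<in>UNIV. \<Sum>y\<in>UNIV. \<Sum>x'\<in>UNIV. \<Sum>y'\<in>UNIV. ?F x y x' y')"
    by (simp add: quad_tv prodm_def mult_ac)
  also have "\<dots> = quad A u * quad B w"
    by (simp add: quad_expand sum_product)
  finally show ?thesis .
qed

lemma density_prodm: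
  assumes dA: "density A" and dB: "density B"
  shows "density (prodm A B)"
proof -
  have hA: "\<forall>p q. A q p = cnj (A p q)" using dA by (rule density_herm)
  have hB: "\<forall>p q. B q p = cnj (B p q)" using dB by (rule density_herm)
  have pB: "\<forall>v. Im (quad B v) = 0 \<and> 0 \<le> Re (quad B v)" using dB by (rule density_psd)
  have pA: "\<forall>v. 0 \<le> Re (quad A v)" using density_psd[OF dA] by blast
  obtain W and m :: nat where Wm: "\<forall>x y. A x y = (\<Sum>k<m. W k x * cnj (W k y))"
    using psd_decomp[OF hA pA] by blast
  have q: "quad (prodm A B) v = (\<Sum>k<m. quad B (\<lambda>y. \<Sum>x\<in>UNIV. cnj (W k x) * v (x, y)))" for v
    unfolding L1 L2[OF Wm] L3 ..
  have herm: "\<forall>p q. prodm A B q p = cnj (prodm A B p q)"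
  proof (intro allI)
    fix p q :: "'a \<times> 'b"
    show "prodm A B q p = cnj (prodm A B p q)"
      using hA[rule_format, of "fst p" "fst q"] hB[rule_format, of "snd p" "snd q"]
      by (simp add: prodm_def)
  qed
  have tr: "(\<Sum>p\<in>UNIV. prodm A B p p) = 1"
  proof -
    have "(\<Sum>p\<in>UNIV. prodm A B p p) = trace A * trace B"
      by (simp add: prodm_def sum_pair trace_def sum_product)
    thus ?thesis using density_trace[OF dA] density_trace[OF dB] by simp
  qed
  show ?thesis unfolding density_def
  proof (intro conjI allI)
    fix p q show "prodm A B q p = cnj (prodm A B p q)" using herm by blast
  next
    fix v
    show "Im (cinner_fun v (apply_op (prodm A B) v)) = 0"
      using q[of v] pB unfolding quad_def by (simp add: Im_sum)
  next
    fix v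
    show "0 \<le> Re (cinner_fun v (apply_op (prodm A B) v))"
      using q[of v] pB unfolding quad_def by (simp add: Re_sum sum_nonneg)
  next
    show "(\<Sum>x\<in>UNIV. prodm A B x x) = 1" by (rule tr)
  qed
qed

lemma ent_mult:
  assumes "b > 1" "p \<ge> 0" "q \<ge> 0"
  shows "ent b (p * q) = q * ent b p + p * ent b q"
proof (cases "p = 0 \<or> q = 0")
  case True thus ?thesis by (auto simp: ent_def)
next
  case False
  hence "p > 0" "q > 0" using assms by auto
  thus ?thesis using assms by (simp add: ent_def log_mult algebra_simps)
qed

lemma probs_sum1:
  assumes "density A" "onb e"
  shows "(\<Sum>i\<in>UNIV. Re (quad A (e i))) = 1"
proof -
  have "(\<Sum>i\<in>UNIV. quad A (e i)) = 1"
    using trace_onb[OF assms(2), of A] density_trace[OF assms(1)] by simp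
  hence "Re (\<Sum>i\<in>UNIV. quad A (e i)) = 1" by simp
  thus ?thesis by (simp add: Re_sum)
qed

lemma meas_entropy_prod:
  fixes A :: "'a::finite \<Rightarrow> 'a \<Rightarrow> complex" and B :: "'b::finite \<Rightarrow> 'b \<Rightarrow> complex"
  assumes b: "b > 1" and dA: "density A" and dB: "density B" and oe: "onb e" and of: "onb f"
  shows "meas_entropy b (tensor_basis e f) (prodm A B) = meas_entropy b e A + meas_entropy b f B"
proof -
  define p where "p i = Re (quad A (e i))" for i
  define q where "q k = Re (quad B (f k))" for k
  have pA: "\<forall>v. Im (quad A v) = 0 \<and> 0 \<le> Re (quad A v)" using dA by (rule density_psd)
  have pB: "\<forall>v. Im (quad B v) = 0 \<and> 0 \<le> Re (quad B v)" using dB by (rule density_psd)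
  have p0: "p i \<ge> 0" for i using pA by (simp add: p_def)
  have q0: "q k \<ge> 0" for k using pB by (simp add: q_def)
  have p1: "(\<Sum>i\<in>UNIV. p i) = 1" unfolding p_def by (rule probs_sum1[OF dA oe])
  have q1: "(\<Sum>k\<in>UNIV. q k) = 1" unfolding q_def by (rule probs_sum1[OF dB of])
  have pq: "Re (quad (prodm A B) (tv (e i) (f k))) = p i * q k" for i k
    unfolding quad_prodm_tv p_def q_def using pA pB by simp
  have "meas_entropy b (tensor_basis e f) (prodm A B) = - (\<Sum>i\<in>UNIV. \<Sum>k\<in>UNIV. ent b (p i * q k))"
    unfolding meas_entropy_tensor pq ..
  also have "\<dots> = - (\<Sum>i\<in>UNIV. \<Sum>k\<in>UNIV. q k * ent b (p i) + p i * ent b (q k))"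
    using ent_mult[OF b p0 q0] by simp
  also have "\<dots> = - ((\<Sum>i\<in>UNIV. ent b (p i)) + (\<Sum>k\<in>UNIV. ent b (q k)))"
    by (simp add: sum.distrib sum_distrib_left[symmetric] sum_distrib_right[symmetric] p1 q1)
  also have "\<dots> = meas_entropy b e A + meas_entropy b f B"
    by (simp add: meas_entropy_ent p_def q_def)
  finally show ?thesis .
qed



lemma density_delta: "density (\<lambda>x y. if x = a \<and> y = a then (1::complex) else 0)"
proof -
  let ?D = "\<lambda>x y. if x = a \<and> y = a then (1::complex) else 0"
  have q: "quad ?D v = cnj (v a) * v a" for v
  proof -
    have "cnj (v x) * ?D x y * v y = (if x = a \<and> y = a then cnj (v a) * v a else 0)" for x y by auto
    thus ?thesis by (simp add: quad_expand dsum_delta2)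
  qed
  have z: "cnj (v a) * v a = complex_of_real ((cmod (v a))\<^sup>2)" for v
    by (metis complex_norm_square mult.commute of_real_power)
  show ?thesis unfolding density_def
  proof (intro conjI allI)
    fix x y show "?D y x = cnj (?D x y)" by auto
  next
    fix v show "Im (cinner_fun v (apply_op ?D v)) = 0"
      using q[of v] z[of v] unfolding quad_def by simp
  next
    fix v show "0 \<le> Re (cinner_fun v (apply_op ?D v))"
      using q[of v] z[of v] unfolding quad_def by simp
  next
    have "(\<lambda>x. ?D x x) = (\<lambda>x. if x = a then 1 else 0)" by auto
    thus "(\<Sum>x\<in>UNIV. ?D x x) = 1" by simp
  qed
qed

lemma densities_ne: "{\<rho>::'n::finite \<Rightarrow> 'n \<Rightarrow> complex. density \<rho>} \<noteq> {}"
  using density_delta by blast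

theorem proposition1:
  fixes b lam mu cA cB :: real
    and XA YA :: "'a::finite \<Rightarrow> 'a \<Rightarrow> complex"
    and XB YB :: "'b::finite \<Rightarrow> 'b \<Rightarrow> complex"
  assumes "b > 1"
    and "lam > 0" and "mu > 0"
    and "onb XA" and "onb YA" and "onb XB" and "onb YB"
    and hA: "\<forall>\<rho>::'a \<Rightarrow> 'a \<Rightarrow> complex. density \<rho> \<longrightarrow>
               lam * meas_entropy b XA \<rho> + mu * meas_entropy b YA \<rho> \<ge> cA"
    and hB: "\<forall>\<rho>::'b \<Rightarrow> 'b \<Rightarrow> complex. density \<rho> \<longrightarrow>
               lam * meas_entropy b XB \<rho> + mu * meas_entropy b YB \<rho> \<ge> cB"
  shows "(\<forall>\<rho>::('a \<times> 'b) \<Rightarrow> ('a \<times> 'b) \<Rightarrow> complex. density \<rho> \<longrightarrow>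
            lam * meas_entropy b (tensor_basis XA XB) \<rho>
              + mu * meas_entropy b (tensor_basis YA YB) \<rho> \<ge> cA + cB)
       \<and> ((cA = (INF \<rho>\<in>{\<rho>::'a \<Rightarrow> 'a \<Rightarrow> complex. density \<rho>}.
                   lam * meas_entropy b XA \<rho> + mu * meas_entropy b YA \<rho>)
          \<and> cB = (INF \<rho>\<in>{\<rho>::'b \<Rightarrow> 'b \<Rightarrow> complex. density \<rho>}.
                   lam * meas_entropy b XB \<rho> + mu * meas_entropy b YB \<rho>))
          \<longrightarrow> (INF \<rho>\<in>{\<rho>::('a \<times> 'b) \<Rightarrow> ('a \<times> 'b) \<Rightarrow> complex. density \<rho>}.
                 lam * meas_entropy b (tensor_basis XA XB) \<rho>
                   + mu * meas_entropy b (tensor_basis YA YB) \<rho>) = cA + cB)"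
proof
  show P1: "\<forall>\<rho>::('a \<times> 'b) \<Rightarrow> ('a \<times> 'b) \<Rightarrow> complex. density \<rho> \<longrightarrow>
            lam * meas_entropy b (tensor_basis XA XB) \<rho>
              + mu * meas_entropy b (tensor_basis YA YB) \<rho> \<ge> cA + cB"
    using part1[OF assms(1-7) hA hB] by blast
  define fA where "fA \<rho> = lam * meas_entropy b XA \<rho> + mu * meas_entropy b YA \<rho>" for \<rho> :: "'a \<Rightarrow> 'a \<Rightarrow> complex"
  define fB where "fB \<rho> = lam * meas_entropy b XB \<rho> + mu * meas_entropy b YB \<rho>" for \<rho> :: "'b \<Rightarrow> 'b \<Rightarrow> complex"
  define fAB where "fAB \<rho> = lam * meas_entropy b (tensor_basis XA XB) \<rho>
                   + mu * meas_entropy b (tensor_basis YA YB) \<rho>" for \<rho> :: "('a \<times> 'b) \<Rightarrow> ('a \<times> 'b) \<Rightarrow> complex"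
  define DA where "DA = {\<rho>::'a \<Rightarrow> 'a \<Rightarrow> complex. density \<rho>}"
  define DB where "DB = {\<rho>::'b \<Rightarrow> 'b \<Rightarrow> complex. density \<rho>}"
  define DAB where "DAB = {\<rho>::('a \<times> 'b) \<Rightarrow> ('a \<times> 'b) \<Rightarrow> complex. density \<rho>}"
  have neA: "DA \<noteq> {}" unfolding DA_def by (rule densities_ne)
  have neB: "DB \<noteq> {}" unfolding DB_def by (rule densities_ne)
  have neAB: "DAB \<noteq> {}" unfolding DAB_def by (rule densities_ne)
  have lowAB: "\<And>\<rho>. \<rho> \<in> DAB \<Longrightarrow> cA + cB \<le> fAB \<rho>" using P1 unfolding DAB_def fAB_def by blast
  have bdd: "bdd_below (fAB ` DAB)" using lowAB by (intro bdd_belowI2) auto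
  have "(cA = (INF \<rho>\<in>DA. fA \<rho>) \<and> cB = (INF \<rho>\<in>DB. fB \<rho>)) \<longrightarrow> (INF \<rho>\<in>DAB. fAB \<rho>) = cA + cB"
  proof
    assume eq: "cA = (INF \<rho>\<in>DA. fA \<rho>) \<and> cB = (INF \<rho>\<in>DB. fB \<rho>)"
    have ge: "cA + cB \<le> (INF \<rho>\<in>DAB. fAB \<rho>)" by (rule cINF_greatest[OF neAB lowAB])
    have prod: "(INF \<rho>\<in>DAB. fAB \<rho>) \<le> fA \<rho>A + fB \<rho>B" if "\<rho>A \<in> DA" "\<rho>B \<in> DB" for \<rho>A \<rho>B
    proof -
      have dA: "density \<rho>A" and dB: "density \<rho>B" using that unfolding DA_def DB_def by auto
      have "prodm \<rho>A \<rho>B \<in> DAB" unfolding DAB_def using density_prodm[OF dA dB] by simp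
      hence "(INF \<rho>\<in>DAB. fAB \<rho>) \<le> fAB (prodm \<rho>A \<rho>B)" by (rule cINF_lower[OF bdd])
      also have "fAB (prodm \<rho>A \<rho>B) = fA \<rho>A + fB \<rho>B"
        unfolding fAB_def fA_def fB_def
        using meas_entropy_prod[OF assms(1) dA dB assms(4) assms(6)]
              meas_entropy_prod[OF assms(1) dA dB assms(5) assms(7)]
        by (simp add: algebra_simps)
      finally show ?thesis .
    qed
    have "(INF \<rho>\<in>DAB. fAB \<rho>) - fB \<rho>B \<le> cA" if "\<rho>B \<in> DB" for \<rho>B
    proof -
      have "(INF \<rho>\<in>DAB. fAB \<rho>) - fB \<rho>B \<le> (INF \<rho>\<in>DA. fA \<rho>)"
        using prod[OF _ that] by (intro cINF_greatest[OF neA]) (simp add: algebra_simps)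
      thus ?thesis using eq by simp
    qed
    hence "(INF \<rho>\<in>DAB. fAB \<rho>) - cA \<le> (INF \<rho>\<in>DB. fB \<rho>)"
      by (intro cINF_greatest[OF neB]) (simp add: algebra_simps)
    hence le: "(INF \<rho>\<in>DAB. fAB \<rho>) \<le> cA + cB" using eq by simp
    show "(INF \<rho>\<in>DAB. fAB \<rho>) = cA + cB" using ge le by simp
  qed
  thus "(cA = (INF \<rho>\<in>{\<rho>::'a \<Rightarrow> 'a \<Rightarrow> complex. density \<rho>}.
                   lam * meas_entropy b XA \<rho> + mu * meas_entropy b YA \<rho>)
          \<and> cB = (INF \<rho>\<in>{\<rho>::'b \<Rightarrow> 'b \<Rightarrow> complex. density \<rho>}.
                   lam * meas_entropy b XB \<rho> + mu * meas_entropy b YB \<rho>))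
          \<longrightarrow> (INF \<rho>\<in>{\<rho>::('a \<times> 'b) \<Rightarrow> ('a \<times> 'b) \<Rightarrow> complex. density \<rho>}.
                 lam * meas_entropy b (tensor_basis XA XB) \<rho>
                   + mu * meas_entropy b (tensor_basis YA YB) \<rho>) = cA + cB"
    unfolding fA_def fB_def fAB_def DA_def DB_def DAB_def .
qed

end
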